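(* Let $T>0$, $\xi\in C^{1+\beta}([0,T])$ with $\beta>1/2$, and $f\in C^{1/2}([0,T])$. For $0\le s<t\le T$ let $$K(t,s)=\frac{\xi(t)-\xi(s)}{t-s}\,\frac{e^{-\frac{(\xi(t)-\xi(s))^2}{4(t-s)}}}{(t-s)^{1/2}},$$ and define $g(t)=\int_0^tK(t,s)f(s)\,ds$ for $t\in[0,T]$. Then $g\in C^{1/2}([0,T])$. *)

theory Defs
  imports "HOL-Analysis.Analysis"
begin

text \<open>Hoelder space C^alpha(S) for 0 < alpha: functions on S with finite
  alpha-Hoelder seminorm (on a compact interval this implies continuity and boundedness).\<close>
definition holder_on :: "real \<Rightarrow> real set \<Rightarrow> (real \<Rightarrow> real) \<Rightarrow> bool" where
  "holder_on \<alpha> S f \<longleftrightarrow> (\<exists>C. \<forall>x\<in>S. \<forall>y\<in>S. \<bar>f x - f y\<bar> \<le> C * \<bar>x - y\<bar> powr \<alpha>)"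

definition C1_holder_on :: "real \<Rightarrow> real set \<Rightarrow> (real \<Rightarrow> real) \<Rightarrow> bool" where
  "C1_holder_on \<beta> S f \<longleftrightarrow>
     (\<exists>f'. (\<forall>t\<in>S. (f has_real_derivative f' t) (at t within S)) \<and> holder_on \<beta> S f')"

text \<open>The kernel K(t,s), meant for s < t.\<close>
definition kernelK :: "(real \<Rightarrow> real) \<Rightarrow> real \<Rightarrow> real \<Rightarrow> real" where
  "kernelK \<xi> t s = (\<xi> t - \<xi> s) / (t - s) *
      (exp (- ((\<xi> t - \<xi> s)^2 / (4 * (t - s)))) / (t - s) powr (1/2))"

end

theory Submission
  imports Defs
begin

lemma inv_sqrt_int:
  fixes a b t :: real
  assumes "a \<le> b" "b \<le> t"
  shows "((\<lambda>s. 1 / sqrt (t - s)) has_integral (2 * sqrt (t - a) - 2 * sqrt (t - b))) {a..b}"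
proof -
  have "((\<lambda>s. 1 / sqrt (t - s)) has_integral ((\<lambda>s. -2 * sqrt (t - s)) b - (\<lambda>s. -2 * sqrt (t - s)) a)) {a..b}"
  proof (rule fundamental_theorem_of_calculus_interior)
    show "a \<le> b" by fact
    show "continuous_on {a..b} (\<lambda>s. -2 * sqrt (t - s))" by (intro continuous_intros)
    fix x assume x: "x \<in> {a<..<b}"
    then have tx: "t - x > 0" using assms by auto
    have d1: "((\<lambda>s. t - s) has_real_derivative (0 - 1)) (at x)"
      by (intro derivative_intros)
    have "((\<lambda>s. -2 * sqrt (t - s)) has_real_derivative (-2 * (inverse (sqrt (t - x)) / 2 * (0 - 1)))) (at x)"
      by (intro DERIV_cmult DERIV_chain2[OF DERIV_real_sqrt[OF tx] d1])
    moreover have "-2 * (inverse (sqrt (t - x)) / 2 * (0 - 1)) = 1 / sqrt (t - x)"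
      by (simp add: field_simps)
    ultimately show "((\<lambda>s. -2 * sqrt (t - s)) has_vector_derivative 1 / sqrt (t - x)) (at x)"
      by (simp add: has_real_derivative_iff_has_vector_derivative)
  qed
  then show ?thesis by simp
qed

lemma exp_lip:
  fixes a b :: real
  assumes "0 \<le> a" "0 \<le> b"
  shows "\<bar>exp (-a) - exp (-b)\<bar> \<le> \<bar>a - b\<bar>"
proof -
  have key: "\<bar>exp (-x) - exp (-y)\<bar> \<le> \<bar>x - y\<bar>" if "0 \<le> y" "y \<le> x" for x y :: real
  proof -
    have "exp (-x) = exp (-y) * exp (-(x - y))" by (simp flip: exp_add)
    moreover have "exp (-y) \<le> 1" using that by simp
    moreover have "1 - (x - y) \<le> exp (-(x - y))" using exp_ge_add_one_self[of "y-x"] by (simp add: algebra_simps)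
    moreover have "exp (-(x - y)) \<le> 1" using that by simp
    ultimately have "exp (-y) - exp (-x) = exp (-y) * (1 - exp (-(x - y)))"
      by (simp add: algebra_simps)
    also have "\<dots> \<le> 1 - exp (-(x - y))"
      using \<open>exp (-y) \<le> 1\<close> \<open>exp (-(x - y)) \<le> 1\<close> by (intro mult_left_le_one_le) auto
    also have "\<dots> \<le> x - y" using \<open>1 - (x - y) \<le> exp (-(x - y))\<close> by linarith
    finally have "exp (-y) - exp (-x) \<le> x - y" .
    moreover have "exp (-x) \<le> exp (-y)" using that by simp
    ultimately show ?thesis using that by simp
  qed
  show ?thesis
  proof (cases "b \<le> a")
    case True then show ?thesis using key assms by blast
  next
    case False then show ?thesis using key[of a b] assms by (simp add: abs_minus_commute)
  qed
qed

lemma phi_diff: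
  fixes q1 q2 r1 r2 M T :: real
  assumes "\<bar>q1\<bar> \<le> M" "\<bar>q2\<bar> \<le> M" "0 \<le> r2" "r2 \<le> r1" "r1 \<le> T"
  shows "\<bar>q1 * exp (-(q1^2 * r1 / 4)) - q2 * exp (-(q2^2 * r2 / 4))\<bar>
     \<le> \<bar>q1 - q2\<bar> * (1 + M^2 * T / 2) + M^3 * (r1 - r2) / 4"
proof -
  define e1 where "e1 = exp (-(q1^2 * r1 / 4))"
  define e2 where "e2 = exp (-(q2^2 * r2 / 4))"
  have M0: "0 \<le> M" using assms by linarith
  have e1: "0 \<le> e1" "e1 \<le> 1" unfolding e1_def using assms by auto
  have "q1 * e1 - q2 * e2 = (q1 - q2) * e1 + q2 * (e1 - e2)" by (simp add: algebra_simps)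
  then have "\<bar>q1 * e1 - q2 * e2\<bar> \<le> \<bar>(q1 - q2) * e1\<bar> + \<bar>q2 * (e1 - e2)\<bar>"
    by (metis abs_triangle_ineq)
  also have "\<bar>(q1 - q2) * e1\<bar> = \<bar>q1 - q2\<bar> * e1" using e1 by (simp add: abs_mult)
  also have "\<bar>q2 * (e1 - e2)\<bar> = \<bar>q2\<bar> * \<bar>e1 - e2\<bar>" by (simp add: abs_mult)
  also have "\<bar>q1 - q2\<bar> * e1 \<le> \<bar>q1 - q2\<bar>" using e1 by (simp add: mult_left_le)
  also have "\<bar>q2\<bar> * \<bar>e1 - e2\<bar> \<le> M * \<bar>e1 - e2\<bar>" using assms(2) by (simp add: mult_right_mono)
  also have "\<bar>e1 - e2\<bar> \<le> \<bar>q1^2 * r1 / 4 - q2^2 * r2 / 4\<bar>"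
    unfolding e1_def e2_def using assms by (intro exp_lip) auto
  also have "q1^2 * r1 / 4 - q2^2 * r2 / 4 = ((q1 - q2) * (q1 + q2) * r1 + q2^2 * (r1 - r2)) / 4"
    by (simp add: algebra_simps power2_eq_square)
  also have "\<bar>((q1 - q2) * (q1 + q2) * r1 + q2^2 * (r1 - r2)) / 4\<bar> \<le> (\<bar>q1 - q2\<bar> * (2*M) * T + M^2 * (r1 - r2)) / 4"
  proof -
    have "\<bar>(q1 - q2) * (q1 + q2) * r1\<bar> \<le> \<bar>q1 - q2\<bar> * (2*M) * T"
    proof -
      have "\<bar>q1 + q2\<bar> \<le> 2 * M" using assms by linarith
      moreover have "\<bar>r1\<bar> \<le> T" using assms by simp
      ultimately show ?thesis unfolding abs_mult
        by (intro mult_mono) (auto simp: M0)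
    qed
    moreover have "\<bar>q2^2 * (r1 - r2)\<bar> \<le> M^2 * (r1 - r2)"
    proof -
      have "q2^2 \<le> M^2" using assms(2) by (metis abs_le_square_iff abs_of_nonneg M0 abs_ge_zero order_trans abs_le_square_iff)
      then show ?thesis using assms by (simp add: abs_mult mult_right_mono)
    qed
    ultimately show ?thesis by simp
  qed
  finally have "\<bar>q1 * e1 - q2 * e2\<bar> \<le> \<bar>q1 - q2\<bar> + M * ((\<bar>q1 - q2\<bar> * (2*M) * T + M^2 * (r1 - r2)) / 4)"
    using M0 by (simp add: mult_left_mono)
  also have "\<dots> = \<bar>q1 - q2\<bar> * (1 + M^2 * T / 2) + M^3 * (r1 - r2) / 4"
    by (simp add: field_simps power2_eq_square power3_eq_cube)
  finally show ?thesis unfolding e1_def e2_def .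
qed

lemma int_bound:
  fixes F G :: "real \<Rightarrow> real"
  assumes ab: "a \<le> b" and cF: "continuous_on {a..<b} F"
    and FG: "\<And>s. s \<in> {a..<b} \<Longrightarrow> \<bar>F s\<bar> \<le> G s" and G: "(G has_integral I) {a..b}"
  shows "F integrable_on {a..b} \<and> \<bar>integral {a..b} F\<bar> \<le> I"
proof -
  have sp: "(H has_integral J) {a..<b} \<longleftrightarrow> (H has_integral J) {a..b}" for H :: "real \<Rightarrow> real" and J
    by (rule has_integral_spike_set_eq; rule negligible_subset[OF negligible_sing[of b]]; auto)
  have G': "(G has_integral I) {a..<b}" using G sp by blast
  have L: "{a..<b} \<in> sets lebesgue" by simp
  have mF: "F \<in> borel_measurable (lebesgue_on {a..<b})"
    by (rule continuous_imp_measurable_on_sets_lebesgue[OF cF L])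
  have iF: "F integrable_on {a..<b}"
    by (rule measurable_bounded_by_integrable_imp_integrable_real[OF mF _ FG L]) (use G' in blast)
  then have hF: "(F has_integral (integral {a..<b} F)) {a..b}" using sp by blast
  have "norm (integral {a..<b} F) \<le> I"
    by (rule integral_norm_bound_integral'[OF _ mF L G']) (use FG in auto)
  then show ?thesis using hF by (auto simp: integral_unique)
qed

theorem lemma3p14:
  fixes T \<beta> :: real and \<xi> f :: "real \<Rightarrow> real"
  assumes "T > 0"
    and "\<beta> > 1/2"
    and "C1_holder_on \<beta> {0..T} \<xi>"
    and "holder_on (1/2) {0..T} f"
  shows "(\<forall>t\<in>{0..T}. (\<lambda>s. kernelK \<xi> t s * f s) integrable_on {0..t}) \<and>
    holder_on (1/2) {0..T} (\<lambda>t. integral {0..t} (\<lambda>s. kernelK \<xi> t s * f s))"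
proof -
  obtain \<xi>' where d\<xi>: "\<And>t. t \<in> {0..T} \<Longrightarrow> (\<xi> has_real_derivative \<xi>' t) (at t within {0..T})"
    and h\<xi>: "holder_on \<beta> {0..T} \<xi>'"
    using assms(3) unfolding C1_holder_on_def by blast
  obtain Cx where Cx: "\<And>x y. x \<in> {0..T} \<Longrightarrow> y \<in> {0..T} \<Longrightarrow> \<bar>\<xi>' x - \<xi>' y\<bar> \<le> Cx * \<bar>x - y\<bar> powr \<beta>"
    using h\<xi> unfolding holder_on_def by blast
  define H where "H = max Cx 0 * T powr (\<beta> - 1/2)"
  have H0: "0 \<le> H" by (simp add: H_def)
  have Hh: "\<bar>\<xi>' x - \<xi>' y\<bar> \<le> H * sqrt \<bar>x - y\<bar>" if xy: "x \<in> {0..T}" "y \<in> {0..T}" for x y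
  proof -
    have d: "\<bar>x - y\<bar> \<le> T" using xy by auto
    have "\<bar>x - y\<bar> powr \<beta> = \<bar>x - y\<bar> powr (\<beta> - 1/2) * \<bar>x - y\<bar> powr (1/2)"
      by (simp flip: powr_add)
    also have "\<dots> \<le> T powr (\<beta> - 1/2) * sqrt \<bar>x - y\<bar>"
      using assms(2) d by (simp add: powr_half_sqrt mult_right_mono powr_mono2)
    finally have a: "\<bar>x - y\<bar> powr \<beta> \<le> T powr (\<beta> - 1/2) * sqrt \<bar>x - y\<bar>" .
    have "\<bar>\<xi>' x - \<xi>' y\<bar> \<le> Cx * \<bar>x - y\<bar> powr \<beta>" using Cx xy by blast
    also have "\<dots> \<le> max Cx 0 * \<bar>x - y\<bar> powr \<beta>" by (simp add: mult_right_mono)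
    also have "\<dots> \<le> max Cx 0 * (T powr (\<beta> - 1/2) * sqrt \<bar>x - y\<bar>)"
      using a by (simp add: mult_left_mono)
    finally show ?thesis by (simp add: H_def mult.assoc)
  qed
  define M where "M = \<bar>\<xi>' 0\<bar> + H * sqrt T"
  have Mb: "\<bar>\<xi>' x\<bar> \<le> M" if "x \<in> {0..T}" for x
  proof -
    have "\<bar>\<xi>' x - \<xi>' 0\<bar> \<le> H * sqrt \<bar>x - 0\<bar>" using Hh[of x 0] that assms(1) by auto
    also have "\<dots> \<le> H * sqrt T" using that H0 by (intro mult_left_mono) auto
    finally show ?thesis unfolding M_def by linarith
  qed
  have M0: "0 \<le> M" using Mb[of 0] assms(1) by force
  have mvt: "\<exists>c\<in>{a<..<b}. \<xi> b - \<xi> a = \<xi>' c * (b - a)" if "0 \<le> a" "a < b" "b \<le> T" for a b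
  proof -
    have "\<exists>c\<in>{a<..<b}. \<xi> b - \<xi> a = (\<lambda>h. \<xi>' c * h) (b - a)"
    proof (rule mvt_simple)
      show "a < b" by fact
      fix x assume "a \<le> x" "x \<le> b"
      then have "(\<xi> has_real_derivative \<xi>' x) (at x within {0..T})" using d\<xi> that by auto
      then have "(\<xi> has_real_derivative \<xi>' x) (at x within {a..b})"
        by (rule DERIV_subset) (use that in auto)
      then show "(\<xi> has_derivative (\<lambda>h. \<xi>' x * h)) (at x within {a..b})"
        by (simp add: has_field_derivative_def)
    qed
    then show ?thesis by simp
  qed
  define qq where "qq t s = (\<xi> t - \<xi> s) / (t - s)" for t s
  have qbd: "\<bar>qq b a\<bar> \<le> M" if ab: "0 \<le> a" "a < b" "b \<le> T" for a b
  proof -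
    obtain c where c: "c \<in> {a<..<b}" "\<xi> b - \<xi> a = \<xi>' c * (b - a)" using mvt[OF ab] by blast
    then have "qq b a = \<xi>' c" using ab by (simp add: qq_def)
    then show ?thesis using Mb[of c] c ab by auto
  qed
  have qhol: "\<bar>qq t s - qq t' s\<bar> \<le> H * sqrt (t - t')" if hyp: "0 \<le> s" "s < t'" "t' < t" "t \<le> T" for s t' t
  proof -
    obtain c1 where c1: "c1 \<in> {t'<..<t}" "\<xi> t - \<xi> t' = \<xi>' c1 * (t - t')" using mvt[of t' t] hyp by force
    obtain c2 where c2: "c2 \<in> {s<..<t'}" "\<xi> t' - \<xi> s = \<xi>' c2 * (t' - s)" using mvt[of s t'] hyp by force
    have "qq t s - qq t' s = (\<xi>' c1 - \<xi>' c2) * (t - t') / (t - s)"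
    proof -
      have "\<xi> t - \<xi> s = \<xi>' c1 * (t - t') + \<xi>' c2 * (t' - s)" using c1 c2 by linarith
      then have e1: "qq t s = (\<xi>' c1 * (t - t') + \<xi>' c2 * (t' - s)) / (t - s)" by (simp add: qq_def)
      have e2: "qq t' s = \<xi>' c2" using c2 hyp by (simp add: qq_def)
      have ts: "t - s \<noteq> 0" using hyp by simp
      have "qq t s - qq t' s = (\<xi>' c1 * (t - t') + \<xi>' c2 * (t' - s) - \<xi>' c2 * (t - s)) / (t - s)"
        unfolding e1 e2 using ts by (simp add: field_simps)
      also have "\<xi>' c1 * (t - t') + \<xi>' c2 * (t' - s) - \<xi>' c2 * (t - s) = (\<xi>' c1 - \<xi>' c2) * (t - t')"
        by (simp add: algebra_simps)
      finally show ?thesis .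
    qed
    also have "\<bar>\<dots>\<bar> = \<bar>\<xi>' c1 - \<xi>' c2\<bar> * (t - t') / (t - s)" using that by (simp add: abs_mult)
    also have "\<dots> \<le> H * sqrt (t - s) * (t - t') / (t - s)"
    proof -
      have "\<bar>\<xi>' c1 - \<xi>' c2\<bar> \<le> H * sqrt \<bar>c1 - c2\<bar>" using c1 c2 hyp by (intro Hh) auto
      also have "\<dots> \<le> H * sqrt (t - s)" using c1 c2 H0 by (intro mult_left_mono) auto
      finally show ?thesis using that by (intro divide_right_mono mult_right_mono) auto
    qed
    also have "\<dots> = H * ((t - t') / sqrt (t - s))"
    proof -
      have "sqrt (t - s) * sqrt (t - s) = t - s" using that by simp
      then show ?thesis using that by (simp add: field_simps)
    qed
    also have "\<dots> \<le> H * sqrt (t - t')"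
    proof -
      have "(t - t') / sqrt (t - s) \<le> (t - t') / sqrt (t - t')"
        using that by (intro divide_left_mono) auto
      also have "\<dots> = sqrt (t - t')" using that by (simp add: real_div_sqrt)
      finally show ?thesis using H0 by (intro mult_left_mono)
    qed
    finally show ?thesis .
  qed
  define \<phi> where "\<phi> q r = q * exp (-(q^2 * r / 4))" for q r :: real
  have Kform: "kernelK \<xi> t s = \<phi> (qq t s) (t - s) / sqrt (t - s)" if "s < t" for t s
  proof -
    have "(\<xi> t - \<xi> s)^2 / (4 * (t - s)) = (qq t s)^2 * (t - s) / 4"
    proof -
      have g: "(a / d)^2 * d / 4 = a^2 / (4 * d)" if "d \<noteq> 0" for a d :: real
        using that by (simp add: power2_eq_square field_simps)
      have "t - s \<noteq> 0" using that by simp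
      then show ?thesis unfolding qq_def by (rule g[symmetric])
    qed
    then show ?thesis using that unfolding kernelK_def \<phi>_def qq_def
      by (simp add: powr_half_sqrt)
  qed
  have \<phi>bd: "\<bar>\<phi> q r\<bar> \<le> M" if "\<bar>q\<bar> \<le> M" "0 \<le> r" for q r
  proof -
    have "\<bar>\<phi> q r\<bar> = \<bar>q\<bar> * exp (-(q^2 * r / 4))" by (simp add: \<phi>_def abs_mult)
    also have "\<dots> \<le> \<bar>q\<bar>" using that by (intro mult_left_le) auto
    finally show ?thesis using that by linarith
  qed
  have Kbd: "\<bar>kernelK \<xi> t s\<bar> \<le> M * (1 / sqrt (t - s))" if "0 \<le> s" "s \<le> t" "t \<le> T" for t s
  proof (cases "s = t")
    case True then show ?thesis by (simp add: kernelK_def)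
  next
    case False
    then have st: "s < t" using that by auto
    have "\<bar>kernelK \<xi> t s\<bar> = \<bar>\<phi> (qq t s) (t - s)\<bar> / sqrt (t - s)" using Kform[OF st] st by (simp add: abs_div)
    also have "\<dots> \<le> M / sqrt (t - s)" using \<phi>bd[OF qbd[OF that(1) st that(3)]] st by (intro divide_right_mono) auto
    finally show ?thesis by simp
  qed
  define L where "L = H * (1 + M^2 * T / 2) + M^3 * sqrt T / 4"
  have L0: "0 \<le> L" using H0 M0 assms(1) by (simp add: L_def)
  have Kdiff: "\<bar>kernelK \<xi> t s - kernelK \<xi> t' s\<bar> \<le> L * sqrt (t - t') * (1 / sqrt (t - s)) + M * (1 / sqrt (t' - s) - 1 / sqrt (t - s))"
    if "0 \<le> s" "s < t'" "t' < t" "t \<le> T" for s t' t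
  proof -
    define h1 where "h1 = \<phi> (qq t s) (t - s)"
    define h2 where "h2 = \<phi> (qq t' s) (t' - s)"
    have q1: "\<bar>qq t s\<bar> \<le> M" by (rule qbd) (use that in auto)
    have q2: "\<bar>qq t' s\<bar> \<le> M" by (rule qbd) (use that in auto)
    have "\<bar>h1 - h2\<bar> \<le> \<bar>qq t s - qq t' s\<bar> * (1 + M^2 * T / 2) + M^3 * ((t - s) - (t' - s)) / 4"
      unfolding h1_def h2_def \<phi>_def by (rule phi_diff[OF q1 q2]) (use that in auto)
    also have "\<dots> \<le> H * sqrt (t - t') * (1 + M^2 * T / 2) + M^3 * (sqrt T * sqrt (t - t')) / 4"
    proof (intro add_mono mult_right_mono divide_right_mono mult_left_mono)
      show "\<bar>qq t s - qq t' s\<bar> \<le> H * sqrt (t - t')" by (rule qhol) (use that in auto)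
      have "t - t' = sqrt (t - t') * sqrt (t - t')" using that by simp
      also have "\<dots> \<le> sqrt T * sqrt (t - t')" using that by (intro mult_right_mono) auto
      finally show "t - s - (t' - s) \<le> sqrt T * sqrt (t - t')" by simp
    qed (use M0 assms(1) in auto)
    also have "\<dots> = L * sqrt (t - t')" by (simp add: L_def algebra_simps)
    finally have hd: "\<bar>h1 - h2\<bar> \<le> L * sqrt (t - t')" .
    have h2b: "\<bar>h2\<bar> \<le> M" unfolding h2_def by (rule \<phi>bd[OF q2]) (use that in auto)
    have sq: "1 / sqrt (t - s) \<le> 1 / sqrt (t' - s)" using that by (intro divide_left_mono) auto
    have "kernelK \<xi> t s - kernelK \<xi> t' s = h1 / sqrt (t - s) - h2 / sqrt (t' - s)"
      using Kform that unfolding h1_def h2_def by auto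
    also have "\<dots> = (h1 - h2) * (1 / sqrt (t - s)) - h2 * (1 / sqrt (t' - s) - 1 / sqrt (t - s))"
      by (simp add: algebra_simps diff_divide_distrib)
    finally have eqK: "kernelK \<xi> t s - kernelK \<xi> t' s = (h1 - h2) * (1 / sqrt (t - s)) - h2 * (1 / sqrt (t' - s) - 1 / sqrt (t - s))" .
    have "\<bar>kernelK \<xi> t s - kernelK \<xi> t' s\<bar> \<le> \<bar>h1 - h2\<bar> * (1 / sqrt (t - s)) + \<bar>h2\<bar> * (1 / sqrt (t' - s) - 1 / sqrt (t - s))"
    proof -
      have g: "\<bar>X * u - Y * v\<bar> \<le> \<bar>X\<bar> * u + \<bar>Y\<bar> * v" if "0 \<le> u" "0 \<le> v" for X Y u v :: real
        using that abs_triangle_ineq4[of "X * u" "Y * v"] by (simp add: abs_mult)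
      show ?thesis using g[of "1 / sqrt (t - s)" "1 / sqrt (t' - s) - 1 / sqrt (t - s)" "h1 - h2" h2] sq that
        unfolding eqK by auto
    qed
    also have "\<dots> \<le> L * sqrt (t - t') * (1 / sqrt (t - s)) + M * (1 / sqrt (t' - s) - 1 / sqrt (t - s))"
      using hd h2b sq that by (intro add_mono mult_right_mono) auto
    finally show ?thesis .
  qed
  obtain Cf where Cf: "\<And>x y. x \<in> {0..T} \<Longrightarrow> y \<in> {0..T} \<Longrightarrow> \<bar>f x - f y\<bar> \<le> Cf * \<bar>x - y\<bar> powr (1/2)"
    using assms(4) unfolding holder_on_def by blast
  define Cf' where "Cf' = max Cf 0"
  have Cf': "\<bar>f x - f y\<bar> \<le> Cf' * sqrt \<bar>x - y\<bar>" if "x \<in> {0..T}" "y \<in> {0..T}" for x y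
  proof -
    have "\<bar>f x - f y\<bar> \<le> Cf * sqrt \<bar>x - y\<bar>" using Cf[OF that] by (simp add: powr_half_sqrt)
    also have "\<dots> \<le> Cf' * sqrt \<bar>x - y\<bar>" unfolding Cf'_def by (intro mult_right_mono) auto
    finally show ?thesis .
  qed
  have Cf'0: "0 \<le> Cf'" by (simp add: Cf'_def)
  define B where "B = \<bar>f 0\<bar> + Cf' * sqrt T"
  have fb: "\<bar>f x\<bar> \<le> B" if "x \<in> {0..T}" for x
  proof -
    have "\<bar>f x - f 0\<bar> \<le> Cf' * sqrt \<bar>x - 0\<bar>" using Cf'[of x 0] that assms(1) by auto
    also have "\<dots> \<le> Cf' * sqrt T" using that Cf'0 by (intro mult_left_mono) auto
    finally show ?thesis unfolding B_def by linarith
  qed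
  have B0: "0 \<le> B" using fb[of 0] assms(1) by force
  have contf: "continuous_on {0..T} f"
    unfolding continuous_on_iff
  proof (intro ballI allI impI)
    fix x e :: real assume x: "x \<in> {0..T}" and e: "0 < e"
    define d where "d = (e / (Cf' + 1))^2"
    have d: "0 < d" using e Cf'0 by (simp add: d_def)
    show "\<exists>d>0. \<forall>x'\<in>{0..T}. dist x' x < d \<longrightarrow> dist (f x') (f x) < e"
    proof (intro exI conjI ballI impI)
      show "0 < d" by fact
      fix y assume y: "y \<in> {0..T}" and dy: "dist y x < d"
      have "sqrt \<bar>y - x\<bar> < sqrt d" using dy by (simp add: dist_real_def)
      also have "sqrt d = e / (Cf' + 1)" using e Cf'0 by (simp add: d_def)
      finally have s: "sqrt \<bar>y - x\<bar> < e / (Cf' + 1)" .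
      have "\<bar>f y - f x\<bar> \<le> Cf' * sqrt \<bar>y - x\<bar>" using Cf' x y by blast
      also have "\<dots> \<le> Cf' * (e / (Cf' + 1))" using s Cf'0 by (intro mult_left_mono) auto
      also have "\<dots> < e" using e Cf'0 by (simp add: field_simps)
      finally show "dist (f y) (f x) < e" by (simp add: dist_real_def)
    qed
  qed
  have cont\<xi>: "continuous_on {0..T} \<xi>" by (rule DERIV_continuous_on[OF d\<xi>])
  define k where "k t s = kernelK \<xi> t s * f s" for t s
  have kk: "k t = (\<lambda>s. kernelK \<xi> t s * f s)" for t by (simp add: k_def fun_eq_iff)
  have contK: "continuous_on {0..<t} (k t)" if "t \<le> T" for t
  proof -
    have sub: "{0..<t} \<subseteq> {0..T}" using that by auto
    have c1: "continuous_on {0..<t} \<xi>" using cont\<xi> sub by (rule continuous_on_subset)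
    have c2: "continuous_on {0..<t} f" using contf sub by (rule continuous_on_subset)
    have "continuous_on {0..<t} (\<lambda>s. (\<xi> t - \<xi> s) / (t - s) * (exp (- ((\<xi> t - \<xi> s)^2 / (4 * (t - s)))) / sqrt (t - s)) * f s)"
      by (intro continuous_intros c1 c2) auto
    then show ?thesis
      by (rule continuous_on_cong[THEN iffD1, rotated 2]) (auto simp: k_def kernelK_def powr_half_sqrt)
  qed
  have kb: "\<bar>k t s\<bar> \<le> B * M * (1 / sqrt (t - s))" if "0 \<le> s" "s \<le> t" "t \<le> T" for t s
  proof -
    have "\<bar>k t s\<bar> = \<bar>kernelK \<xi> t s\<bar> * \<bar>f s\<bar>" by (simp add: k_def abs_mult)
    also have "\<dots> \<le> (M * (1 / sqrt (t - s))) * B" using Kbd[OF that] fb[of s] that M0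
      by (intro mult_mono) auto
    finally show ?thesis by (simp add: algebra_simps)
  qed
  have intK: "k t integrable_on {a..t} \<and> \<bar>integral {a..t} (k t)\<bar> \<le> B * M * (2 * sqrt (t - a) - 2 * sqrt (t - t))"
    if "0 \<le> a" "a \<le> t" "t \<le> T" for a t
  proof (rule int_bound)
    show "a \<le> t" by fact
    show "continuous_on {a..<t} (k t)" using contK[OF that(3)] by (rule continuous_on_subset) (use that in auto)
    show "\<bar>k t s\<bar> \<le> B * M * (1 / sqrt (t - s))" if "s \<in> {a..<t}" for s using kb that \<open>0 \<le> a\<close> \<open>t \<le> T\<close> by auto
    show "((\<lambda>s. B * M * (1 / sqrt (t - s))) has_integral (B * M * (2 * sqrt (t - a) - 2 * sqrt (t - t)))) {a..t}"
      by (intro has_integral_mult_right inv_sqrt_int) (use that in auto)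
  qed
  define C0 where "C0 = 4 * B * M + 2 * B * L * sqrt T"
  have C00: "0 \<le> C0" using B0 M0 L0 assms(1) unfolding C0_def by (intro add_nonneg_nonneg mult_nonneg_nonneg) auto
  have est: "\<bar>integral {0..t} (k t) - integral {0..t'} (k t')\<bar> \<le> C0 * sqrt (t - t')"
    if "0 \<le> t'" "t' < t" "t \<le> T" for t' t
  proof -
    define sd where "sd = sqrt (t - t')"
    have sd0: "0 \<le> sd" using that by (simp add: sd_def)
    have t0: "0 \<le> t" "t' \<le> t" "t' \<le> T" using that by linarith+
    have it: "k t integrable_on {0..t}" using intK[of 0 t] that t0 by auto
    have it': "k t' integrable_on {0..t'}" using intK[of 0 t'] that t0 by auto
    have itt': "k t integrable_on {0..t'}" using it by (rule integrable_on_subinterval) (use that in auto)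
    have spl: "integral {0..t} (k t) = integral {0..t'} (k t) + integral {t'..t} (k t)"
      using Henstock_Kurzweil_Integration.integral_combine[where a=0 and c=t' and b=t and f="k t"] it t0 that by auto
    have P1: "\<bar>integral {t'..t} (k t)\<bar> \<le> B * M * (2 * sd)"
      using intK[of t' t] that by (simp add: sd_def)
    define G where "G s = B * (L * sd * (1 / sqrt (t - s)) + M * (1 / sqrt (t' - s) - 1 / sqrt (t - s)))" for s
    have P2: "\<bar>integral {0..t'} (\<lambda>s. k t s - k t' s)\<bar>
       \<le> B * (L * sd * (2 * sqrt (t - 0) - 2 * sqrt (t - t')) + M * ((2 * sqrt (t' - 0) - 2 * sqrt (t' - t')) - (2 * sqrt (t - 0) - 2 * sqrt (t - t'))))"
    proof (rule int_bound[THEN conjunct2])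
      show "0 \<le> t'" by fact
      show "continuous_on {0..<t'} (\<lambda>s. k t s - k t' s)"
      proof (intro continuous_intros)
        show "continuous_on {0..<t'} (k t)"
          by (rule continuous_on_subset[OF contK[OF \<open>t \<le> T\<close>]]) (use that in auto)
        show "continuous_on {0..<t'} (k t')" using contK[of t'] t0 by auto
      qed
      fix s assume s: "s \<in> {0..<t'}"
      have "\<bar>k t s - k t' s\<bar> = \<bar>kernelK \<xi> t s - kernelK \<xi> t' s\<bar> * \<bar>f s\<bar>"
        by (simp add: k_def abs_mult flip: left_diff_distrib)
      also have "\<dots> \<le> (L * sd * (1 / sqrt (t - s)) + M * (1 / sqrt (t' - s) - 1 / sqrt (t - s))) * B"
        using Kdiff[of s t' t] fb[of s] s that unfolding sd_def
        by (intro mult_mono) auto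
      finally show "\<bar>k t s - k t' s\<bar> \<le> B * (L * sd * (1 / sqrt (t - s)) + M * (1 / sqrt (t' - s) - 1 / sqrt (t - s)))"
        by (simp add: algebra_simps)
    next
      show "((\<lambda>s. B * (L * sd * (1 / sqrt (t - s)) + M * (1 / sqrt (t' - s) - 1 / sqrt (t - s)))) has_integral
        B * (L * sd * (2 * sqrt (t - 0) - 2 * sqrt (t - t')) + M * ((2 * sqrt (t' - 0) - 2 * sqrt (t' - t')) - (2 * sqrt (t - 0) - 2 * sqrt (t - t'))))) {0..t'}"
        using that
        by (intro has_integral_mult_right has_integral_add has_integral_diff inv_sqrt_int) auto
    qed
    have "sqrt t \<le> sqrt T" using that by simp
    then have a1: "sqrt t - sd \<le> sqrt T" using sd0 by linarith
    have a2: "sqrt t' \<le> sqrt t" using that by simp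
    have P2': "\<bar>integral {0..t'} (k t) - integral {0..t'} (k t')\<bar> \<le> B * (L * sd * (2 * sqrt T) + M * (2 * sd))"
    proof -
      have "\<bar>integral {0..t'} (k t) - integral {0..t'} (k t')\<bar> = \<bar>integral {0..t'} (\<lambda>s. k t s - k t' s)\<bar>"
        using integral_diff[OF itt' it'] by simp
      also have "\<dots> \<le> B * (L * sd * (2 * sqrt t - 2 * sd) + M * (2 * sqrt t' - (2 * sqrt t - 2 * sd)))"
        using P2 by (simp add: sd_def)
      also have "\<dots> \<le> B * (L * sd * (2 * sqrt T) + M * (2 * sd))"
        using a1 a2 B0 L0 M0 sd0
        by (intro mult_left_mono add_mono) (auto intro!: mult_left_mono mult_nonneg_nonneg)
      finally show ?thesis .
    qed
    have "\<bar>integral {0..t} (k t) - integral {0..t'} (k t')\<bar>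
        \<le> \<bar>integral {t'..t} (k t)\<bar> + \<bar>integral {0..t'} (k t) - integral {0..t'} (k t')\<bar>"
      unfolding spl by linarith
    also have "\<dots> \<le> B * M * (2 * sd) + B * (L * sd * (2 * sqrt T) + M * (2 * sd))"
      using P1 P2' by (rule add_mono)
    also have "\<dots> = C0 * sd" by (simp add: C0_def algebra_simps)
    finally show ?thesis by (simp add: sd_def)
  qed
  show ?thesis
  proof (intro conjI ballI)
    fix t assume "t \<in> {0..T}"
    then show "(\<lambda>s. kernelK \<xi> t s * f s) integrable_on {0..t}" using intK[of 0 t] by (auto simp: kk)
  next
    show "holder_on (1/2) {0..T} (\<lambda>t. integral {0..t} (\<lambda>s. kernelK \<xi> t s * f s))"
      unfolding holder_on_def
    proof (intro exI ballI)
      fix x y assume x: "x \<in> {0..T}" and y: "y \<in> {0..T}"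
      have "\<bar>integral {0..x} (k x) - integral {0..y} (k y)\<bar> \<le> C0 * sqrt \<bar>x - y\<bar>"
      proof (cases x y rule: linorder_cases)
        case less
        then show ?thesis using est[of x y] x y by (simp add: abs_minus_commute)
      next
        case equal then show ?thesis by simp
      next
        case greater
        then show ?thesis using est[of y x] x y by simp
      qed
      then show "\<bar>integral {0..x} (\<lambda>s. kernelK \<xi> x s * f s) - integral {0..y} (\<lambda>s. kernelK \<xi> y s * f s)\<bar>
          \<le> C0 * \<bar>x - y\<bar> powr (1/2)"
        by (simp add: kk powr_half_sqrt)
    qed
  qed
qed

end
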